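(* Let $G$ be a connected threshold graph of order $n\ge 4$ and size $m$ with $n-1<m<\binom{n}{2}$, with backwards zero position sequence $(b_1,\ldots,b_z)$ and numbers $F_p$ as in the context. Let $B\in\mathbb{R}^{z\times z}$ be given by $B_{ij}=b_{\max\{i,j\}}$, $w=(b_1,\ldots,b_z)^\intercal$, and let $\lambda_1,\ldots,\lambda_z$ be the eigenvalues of $B$ with corresponding orthonormal eigenvectors $x_1,\ldots,x_z$. Then \[F_p=\sum_{i=1}^z (w^\intercal x_i)^2\,\lambda_i^{p-1}\qquad(p\in\mathbb{N}).\]
   Context: A threshold graph is a simple graph whose vertices can be ordered $v_1,\ldots,v_n$ so that for each $2\le i\le n$, $v_i$ is either adjacent to all of $v_1,\ldots,v_{i-1}$ (then $a_i=1$) or to none of them (then $a_i=0$); by convention $a_1=1$. Vertex $v_i$ is of type 1 if $a_i=1$ and of type 0 if $a_i=0$; $c$ and $z$ are the numbers of type 1 and type 0 vertices. The backwards zero position sequence $(b_1,\ldots,b_z)$ is defined by letting $b_i$ be the number of type 1 vertices appearing after the $i$-th type 0 vertex in the order $v_1,\ldots,v_n$. For $p\ge1$, $F_p=\sum_{i_1,\ldots,i_p=1}^{z} b_{i_1}\min\{b_{i_1},b_{i_2}\}\cdots\min\{b_{i_{p-1}},b_{i_p}\}\,b_{i_p}$ (with $F_1=\sum_i b_i^2$). *)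

theory Defs
  imports "Jordan_Normal_Form.Matrix" "HOL-Library.FuncSet"
begin

text \<open>A threshold graph is given by its creation sequence a = [a_1,...,a_n]
  (0-based list; True = type 1, False = type 0), with a_1 = 1 by convention.\<close>

definition thr_adj :: "bool list \<Rightarrow> nat \<Rightarrow> nat \<Rightarrow> bool" where
  "thr_adj a i j \<longleftrightarrow> i < length a \<and> j < length a \<and> i \<noteq> j \<and> a ! (max i j)"

definition thr_order :: "bool list \<Rightarrow> nat" where
  "thr_order a = length a"

definition thr_size :: "bool list \<Rightarrow> nat" where
  "thr_size a = card {(i, j). i < j \<and> thr_adj a i j}"

definition thr_connected :: "bool list \<Rightarrow> bool" where
  "thr_connected a \<longleftrightarrow> (\<forall>i < length a. \<forall>j < length a. (thr_adj a)\<^sup>*\<^sup>* i j)"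

definition zero_pos :: "bool list \<Rightarrow> nat list" where
  "zero_pos a = filter (\<lambda>k. \<not> a ! k) [0..<length a]"

definition num_zeros :: "bool list \<Rightarrow> nat" where
  "num_zeros a = length (zero_pos a)"

text \<open>Backwards zero position sequence, 0-based: bzp a i = b_(i+1).\<close>
definition bzp :: "bool list \<Rightarrow> nat \<Rightarrow> nat" where
  "bzp a i = card {k. zero_pos a ! i < k \<and> k < length a \<and> a ! k}"

definition Fp :: "bool list \<Rightarrow> nat \<Rightarrow> nat" where
  "Fp a p = (\<Sum>f \<in> PiE {..<p} (\<lambda>_. {..<num_zeros a}).
     bzp a (f 0) * (\<Prod>k<p - 1. min (bzp a (f k)) (bzp a (f (Suc k)))) * bzp a (f (p - 1)))"

definition Bmat :: "bool list \<Rightarrow> real mat" where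
  "Bmat a = mat (num_zeros a) (num_zeros a) (\<lambda>(i, j). real (bzp a (max i j)))"

definition wvec :: "bool list \<Rightarrow> real vec" where
  "wvec a = vec (num_zeros a) (\<lambda>i. real (bzp a i))"

end

theory Submission
  imports Defs "Jordan_Normal_Form.Determinant"
begin

lemma sum_PiE_insert:
  assumes "finite S" "finite Z" "k \<notin> S"
  shows "(\<Sum>f\<in>PiE (insert k S) (\<lambda>_. Z). g f) = (\<Sum>h\<in>PiE S (\<lambda>_. Z). \<Sum>y\<in>Z. g (h(k:=y)))"
proof -
  have "(\<Sum>f\<in>PiE (insert k S) (\<lambda>_. Z). g f) = (\<Sum>(y,h)\<in>Z \<times> PiE S (\<lambda>_. Z). g (h(k := y)))"
    unfolding PiE_insert_eq by (subst sum.reindex[OF inj_combinator[OF assms(3)]]) (simp_all add: comp_def split_def)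
  also have "\<dots> = (\<Sum>y\<in>Z. \<Sum>h\<in>PiE S (\<lambda>_. Z). g (h(k:=y)))"
    by (simp add: sum.cartesian_product)
  also have "\<dots> = (\<Sum>h\<in>PiE S (\<lambda>_. Z). \<Sum>y\<in>Z. g (h(k:=y)))"
    by (rule sum.swap)
  finally show ?thesis .
qed

primrec vv :: "(nat \<Rightarrow> nat \<Rightarrow> real) \<Rightarrow> (nat \<Rightarrow> real) \<Rightarrow> nat set \<Rightarrow> nat \<Rightarrow> nat \<Rightarrow> real" where
  "vv M b Z 0 = b"
| "vv M b Z (Suc k) = (\<lambda>y. \<Sum>z\<in>Z. M z y * vv M b Z k z)"

lemma path_sum:
  assumes Z: "finite Z"
  shows "(\<Sum>f\<in>PiE {..<Suc k} (\<lambda>_. Z). b (f 0) * (\<Prod>j<k. M (f j) (f (Suc j))) * \<phi> (f k))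
         = (\<Sum>y\<in>Z. vv M b Z k y * \<phi> y)"
proof (induction k arbitrary: \<phi>)
  case 0
  have e: "{..<Suc 0} = insert 0 {}" by auto
  show ?case unfolding e
    by (subst sum_PiE_insert) (use Z in auto)
next
  case (Suc k)
  have e: "{..<Suc (Suc k)} = insert (Suc k) {..<Suc k}" by auto
  have "(\<Sum>f\<in>PiE {..<Suc (Suc k)} (\<lambda>_. Z). b (f 0) * (\<Prod>j<Suc k. M (f j) (f (Suc j))) * \<phi> (f (Suc k)))
     = (\<Sum>h\<in>PiE {..<Suc k} (\<lambda>_. Z). \<Sum>y\<in>Z. b (h 0) * (\<Prod>j<k. M (h j) (h (Suc j))) * (M (h k) y * \<phi> y))"
  proof -
    have pw: "b ((h(Suc k := y)) 0) * (\<Prod>j<Suc k. M ((h(Suc k := y)) j) ((h(Suc k := y)) (Suc j))) * \<phi> ((h(Suc k := y)) (Suc k)) =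
          b (h 0) * (\<Prod>j<k. M (h j) (h (Suc j))) * (M (h k) y * \<phi> y)" for h y
    proof -
      have "(\<Prod>j<k. M ((h(Suc k := y)) j) ((h(Suc k := y)) (Suc j))) = (\<Prod>j<k. M (h j) (h (Suc j)))"
        by (intro prod.cong) auto
      then show ?thesis by (simp add: prod.lessThan_Suc)
    qed
    have ins: "Suc k \<notin> {..<Suc k}" by simp
    show ?thesis unfolding e sum_PiE_insert[OF finite_lessThan Z ins] pw by (rule refl)
  qed
  also have "\<dots> = (\<Sum>h\<in>PiE {..<Suc k} (\<lambda>_. Z). b (h 0) * (\<Prod>j<k. M (h j) (h (Suc j))) * (\<lambda>z. \<Sum>y\<in>Z. M z y * \<phi> y) (h k))"
    by (simp add: sum_distrib_left)
  also have "\<dots> = (\<Sum>z\<in>Z. vv M b Z k z * (\<Sum>y\<in>Z. M z y * \<phi> y))"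
    by (rule Suc.IH)
  also have "\<dots> = (\<Sum>y\<in>Z. vv M b Z (Suc k) y * \<phi> y)"
  proof -
    have "(\<Sum>z\<in>Z. vv M b Z k z * (\<Sum>y\<in>Z. M z y * \<phi> y)) = (\<Sum>z\<in>Z. \<Sum>y\<in>Z. M z y * vv M b Z k z * \<phi> y)"
      by (simp add: sum_distrib_left mult_ac)
    also have "\<dots> = (\<Sum>y\<in>Z. \<Sum>z\<in>Z. M z y * vv M b Z k z * \<phi> y)"
      by (rule sum.swap)
    also have "\<dots> = (\<Sum>y\<in>Z. vv M b Z (Suc k) y * \<phi> y)"
      by (simp add: sum_distrib_right)
    finally show ?thesis .
  qed
  finally show ?case .
qed


lemma bzp_anti:
  assumes "i < j" "j < num_zeros a"
  shows "bzp a j \<le> bzp a i"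
proof -
  have "sorted_wrt (<) (zero_pos a)" unfolding zero_pos_def
    by (rule sorted_wrt_filter) simp
  then have lt: "zero_pos a ! i < zero_pos a ! j"
    using assms by (simp add: sorted_wrt_nth_less num_zeros_def)
  have "{k. zero_pos a ! j < k \<and> k < length a \<and> a ! k} \<subseteq> {k. zero_pos a ! i < k \<and> k < length a \<and> a ! k}"
    using lt by auto
  then show ?thesis unfolding bzp_def by (intro card_mono) auto
qed

lemma bzp_min:
  assumes "i < num_zeros a" "j < num_zeros a"
  shows "min (bzp a i) (bzp a j) = bzp a (max i j)"
  using bzp_anti[of i j a] bzp_anti[of j i a] assms
  by (cases i j rule: linorder_cases) (auto simp: min_def max_def)

theorem corollaryA2:
  fixes a :: "bool list" and lam :: "nat \<Rightarrow> real" and x :: "nat \<Rightarrow> real vec" and p :: nat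
  assumes first: "a \<noteq> [] \<and> a ! 0"
    and conn: "thr_connected a"
    and order: "thr_order a \<ge> 4"
    and size_lo: "thr_order a - 1 < thr_size a"
    and size_hi: "thr_size a < thr_order a choose 2"
    and evec: "\<And>i. i < num_zeros a \<Longrightarrow>
                 x i \<in> carrier_vec (num_zeros a) \<and> Bmat a *\<^sub>v x i = lam i \<cdot>\<^sub>v x i"
    and orthonormal: "\<And>i j. i < num_zeros a \<Longrightarrow> j < num_zeros a \<Longrightarrow>
                 x i \<bullet> x j = (if i = j then 1 else 0)"
    and p: "p \<ge> 1"
  shows "real (Fp a p) = (\<Sum>i<num_zeros a. (wvec a \<bullet> x i)^2 * lam i ^ (p - 1))"
proof -
  define z where "z = num_zeros a"
  define bb where "bb = (\<lambda>i. real (bzp a i))"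
  define M where "M = (\<lambda>i j. real (bzp a (max i j)))"
  define c where "c = (\<lambda>i. wvec a \<bullet> x i)"
  obtain k where pk: "p = Suc k" using p by (cases p) auto
  have dimx: "\<And>i. i < z \<Longrightarrow> dim_vec (x i) = z" using evec unfolding z_def by auto
  have c_eq: "c i = (\<Sum>j<z. bb j * x i $ j)" if "i < z" for i
    unfolding c_def scalar_prod_def wvec_def bb_def using dimx[OF that] that
    by (simp add: z_def lessThan_atLeast0)
  define X where "X = mat z z (\<lambda>(r, q). x q $ r)"
  have Xc: "X \<in> carrier_mat z z" unfolding X_def by simp
  have XtX: "transpose_mat X * X = 1\<^sub>m z"
  proof (rule eq_matI)
    fix i j assume ij: "i < dim_row (1\<^sub>m z)" "j < dim_col (1\<^sub>m z)"
    have "col X i = x i" "col X j = x j"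
      using ij dimx by (auto simp: X_def intro!: eq_vecI)
    then show "(transpose_mat X * X) $$ (i, j) = 1\<^sub>m z $$ (i, j)"
      using ij orthonormal[of i j] by (simp add: X_def z_def)
  qed (auto simp: X_def)
  have XXt: "X * transpose_mat X = 1\<^sub>m z"
    by (rule mat_mult_left_right_inverse[OF _ Xc XtX]) (simp add: Xc)
  have ortho2: "(\<Sum>q<z. x q $ y * x q $ r) = (if y = r then 1 else 0)" if "y < z" "r < z" for y r
  proof -
    have "(X * transpose_mat X) $$ (y, r) = (\<Sum>q<z. x q $ y * x q $ r)"
      using that by (simp add: X_def scalar_prod_def row_def col_def lessThan_atLeast0)
    then show ?thesis using XXt that by simp
  qed
  have complete: "bb y = (\<Sum>i<z. c i * x i $ y)" if "y < z" for y
  proof -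
    have "(\<Sum>i<z. c i * x i $ y) = (\<Sum>i<z. \<Sum>j<z. bb j * (x i $ y * x i $ j))"
      by (intro sum.cong refl) (simp add: c_eq sum_distrib_left sum_distrib_right mult_ac)
    also have "\<dots> = (\<Sum>j<z. bb j * (\<Sum>i<z. x i $ y * x i $ j))"
      by (subst sum.swap) (simp add: sum_distrib_left)
    also have "\<dots> = (\<Sum>j<z. bb j * (if y = j then 1 else 0))"
      using that by (intro sum.cong refl) (simp add: ortho2)
    also have "\<dots> = bb y" using that by (simp add: if_distrib cong: if_cong)
    finally show ?thesis by simp
  qed
  have eig: "(\<Sum>q<z. M y q * x i $ q) = lam i * x i $ y" if "y < z" "i < z" for y i
  proof -
    have "(Bmat a *\<^sub>v x i) $ y = lam i * x i $ y"
    proof -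
      have eq: "Bmat a *\<^sub>v x i = lam i \<cdot>\<^sub>v x i" using evec[of i] that by (simp add: z_def)
      have "(lam i \<cdot>\<^sub>v x i) $ y = lam i * x i $ y"
        using dimx[OF that(2)] that(1) by (simp only: index_smult_vec)
      then show ?thesis by (simp only: eq)
    qed
    moreover have "(Bmat a *\<^sub>v x i) $ y = (\<Sum>q<z. M y q * x i $ q)"
    proof -
      have Bd: "dim_row (Bmat a) = z" "dim_col (Bmat a) = z" by (simp_all add: Bmat_def z_def)
      have "(Bmat a *\<^sub>v x i) $ y = row (Bmat a) y \<bullet> x i" using that Bd by simp
      also have "\<dots> = (\<Sum>q\<in>{0..<z}. row (Bmat a) y $ q * x i $ q)"
        unfolding scalar_prod_def using dimx[OF that(2)] by simp
      also have "\<dots> = (\<Sum>q<z. M y q * x i $ q)"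
        unfolding lessThan_atLeast0[symmetric]
      proof (intro sum.cong refl)
        fix q assume "q \<in> {..<z}"
        then show "row (Bmat a) y $ q * x i $ q = M y q * x i $ q"
          using that Bd by (simp add: Bmat_def z_def M_def)
      qed
      finally show ?thesis .
    qed
    ultimately show ?thesis by simp
  qed
  have Msym: "M i j = M j i" for i j unfolding M_def by (simp add: max.commute)
  have vvE: "vv M bb {..<z} n y = (\<Sum>i<z. c i * lam i ^ n * x i $ y)" if "y < z" for n y
    using that
  proof (induction n arbitrary: y)
    case 0
    then show ?case using complete by simp
  next
    case (Suc n)
    have "vv M bb {..<z} (Suc n) y = (\<Sum>q<z. M q y * (\<Sum>i<z. c i * lam i ^ n * x i $ q))"
      using Suc.IH by simp
    also have "\<dots> = (\<Sum>q<z. \<Sum>i<z. c i * lam i ^ n * (M y q * x i $ q))"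
      by (simp add: sum_distrib_left mult_ac Msym)
    also have "\<dots> = (\<Sum>i<z. c i * lam i ^ n * (\<Sum>q<z. M y q * x i $ q))"
      by (subst sum.swap) (simp add: sum_distrib_left)
    also have "\<dots> = (\<Sum>i<z. c i * lam i ^ Suc n * x i $ y)"
      using Suc.prems by (intro sum.cong refl) (simp add: eig)
    finally show ?case .
  qed
  have "real (Fp a p) = (\<Sum>f\<in>PiE {..<Suc k} (\<lambda>_. {..<z}). bb (f 0) * (\<Prod>j<k. M (f j) (f (Suc j))) * bb (f k))"
    unfolding Fp_def pk of_nat_sum z_def
  proof (intro sum.cong refl)
    fix f assume f: "f \<in> PiE {..<Suc k} (\<lambda>_. {..<num_zeros a})"
    have "(\<Prod>j<k. min (bzp a (f j)) (bzp a (f (Suc j)))) = (\<Prod>j<k. bzp a (max (f j) (f (Suc j))))"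
      using f by (intro prod.cong refl bzp_min) (auto simp: PiE_def Pi_def)
    then show "real (bzp a (f 0) * (\<Prod>ka<Suc k - 1. min (bzp a (f ka)) (bzp a (f (Suc ka)))) * bzp a (f (Suc k - 1))) =
         bb (f 0) * (\<Prod>j<k. M (f j) (f (Suc j))) * bb (f k)"
      by (simp add: bb_def M_def)
  qed
  also have "\<dots> = (\<Sum>y<z. vv M bb {..<z} k y * bb y)"
    by (rule path_sum) simp
  also have "\<dots> = (\<Sum>y<z. \<Sum>i<z. c i * lam i ^ k * (x i $ y * bb y))"
    by (intro sum.cong refl) (simp add: vvE sum_distrib_left sum_distrib_right mult_ac)
  also have "\<dots> = (\<Sum>i<z. c i * lam i ^ k * (\<Sum>y<z. bb y * x i $ y))"
    by (subst sum.swap) (simp add: sum_distrib_left mult_ac)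
  also have "\<dots> = (\<Sum>i<z. c i ^ 2 * lam i ^ k)"
    by (intro sum.cong refl) (simp add: c_eq power2_eq_square)
  finally show ?thesis by (simp add: pk c_def z_def)
qed

end
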